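(* Let $\alpha\ge 4$, let $(x,y)$ be an optimal solution of the LP-relaxation, and let $N'$ and the clusters $M_l$ ($l\in N'$) be produced by the clustering procedure below. Then for every $l\in N'$, $Z_l:=\sum_{j\in M_l}y_j\ge\frac{\alpha-1}{\alpha}$.
   Context: Setting: finite set $N$ of locations, capacity $M>0$, demands $d_j\ge0$, integer $k\ge1$, metric costs $c_{ij}$ on $N$ (nonnegative, $c_{ii}=0$, symmetric, triangle inequality). LP-relaxation: minimize $\sum_{i,j}d_jc_{ij}x_{ij}$ s.t. $\sum_{i}x_{ij}=1$ ($j\in N$), $\sum_j d_jx_{ij}\le My_i$ ($i\in N$), $\sum_i y_i\le k$, $0\le x_{ij}\le y_i$, $0\le y_i\le1$. For $j\in N$ let $C_j=\sum_{i\in N}c_{ij}x_{ij}$. Clustering procedure: order the locations as $1,\dots,n$ so that $C_1\le\dots\le C_n$ (ties arbitrary); start with $N'=\emptyset$; for $j=1,\dots,n$ in turn, if there is no $l\in N'$ with $c_{lj}\le 2\alpha C_j$, add $j$ to $N'$. Then for each $j\in N$ let $N'(j)$ be a closest element of $N'$ to $j$ (ties arbitrary), and set $M_l=\{j\in N: N'(j)=l\}$ for $l\in N'$. *)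

theory Defs
  imports Complex_Main
begin

definition metric_costs :: "'a set \<Rightarrow> ('a \<Rightarrow> 'a \<Rightarrow> real) \<Rightarrow> bool" where
  "metric_costs N c \<longleftrightarrow>
     (\<forall>i\<in>N. \<forall>j\<in>N. c i j \<ge> 0) \<and> (\<forall>i\<in>N. c i i = 0) \<and>
     (\<forall>i\<in>N. \<forall>j\<in>N. c i j = c j i) \<and>
     (\<forall>i\<in>N. \<forall>j\<in>N. \<forall>l\<in>N. c i l \<le> c i j + c j l)"

text \<open>Feasibility for the LP-relaxation (x i j = fraction of demand of j served at i).\<close>
definition lp_feasible :: "'a set \<Rightarrow> ('a \<Rightarrow> real) \<Rightarrow> real \<Rightarrow> nat \<Rightarrow>
    ('a \<Rightarrow> 'a \<Rightarrow> real) \<Rightarrow> ('a \<Rightarrow> real) \<Rightarrow> bool" where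
  "lp_feasible N d M k x y \<longleftrightarrow>
     (\<forall>j\<in>N. (\<Sum>i\<in>N. x i j) = 1) \<and>
     (\<forall>i\<in>N. (\<Sum>j\<in>N. d j * x i j) \<le> M * y i) \<and>
     (\<Sum>i\<in>N. y i) \<le> real k \<and>
     (\<forall>i\<in>N. \<forall>j\<in>N. 0 \<le> x i j \<and> x i j \<le> y i) \<and>
     (\<forall>i\<in>N. 0 \<le> y i \<and> y i \<le> 1)"

definition lp_cost :: "'a set \<Rightarrow> ('a \<Rightarrow> real) \<Rightarrow> ('a \<Rightarrow> 'a \<Rightarrow> real) \<Rightarrow>
    ('a \<Rightarrow> 'a \<Rightarrow> real) \<Rightarrow> real" where
  "lp_cost N d c x = (\<Sum>i\<in>N. \<Sum>j\<in>N. d j * c i j * x i j)"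

definition lp_optimal :: "'a set \<Rightarrow> ('a \<Rightarrow> real) \<Rightarrow> real \<Rightarrow> nat \<Rightarrow> ('a \<Rightarrow> 'a \<Rightarrow> real) \<Rightarrow>
    ('a \<Rightarrow> 'a \<Rightarrow> real) \<Rightarrow> ('a \<Rightarrow> real) \<Rightarrow> bool" where
  "lp_optimal N d M k c x y \<longleftrightarrow> lp_feasible N d M k x y \<and>
     (\<forall>x' y'. lp_feasible N d M k x' y' \<longrightarrow> lp_cost N d c x \<le> lp_cost N d c x')"

definition Cval :: "'a set \<Rightarrow> ('a \<Rightarrow> 'a \<Rightarrow> real) \<Rightarrow> ('a \<Rightarrow> 'a \<Rightarrow> real) \<Rightarrow> 'a \<Rightarrow> real" where
  "Cval N c x j = (\<Sum>i\<in>N. c i j * x i j)"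

fun cluster_centres :: "('a \<Rightarrow> 'a \<Rightarrow> real) \<Rightarrow> real \<Rightarrow> ('a \<Rightarrow> real) \<Rightarrow> 'a set \<Rightarrow> 'a list \<Rightarrow> 'a set" where
  "cluster_centres c \<alpha> C S [] = S"
| "cluster_centres c \<alpha> C S (j # js) =
     cluster_centres c \<alpha> C (if \<exists>l\<in>S. c l j \<le> 2 * \<alpha> * C j then S else insert j S) js"

end

theory Submission
  imports Defs
begin

lemma cc_append: "cluster_centres c a C S (xs @ ys) = cluster_centres c a C (cluster_centres c a C S xs) ys"
  by (induction xs arbitrary: S) auto

lemma cc_sub: "cluster_centres c a C S js \<subseteq> S \<union> set js"
proof (induction js arbitrary: S)
  case (Cons j js) then show ?case by (simp; blast)
qed simp

lemma cc_sup: "S \<subseteq> cluster_centres c a C S js"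
proof (induction js arbitrary: S)
  case (Cons j js) then show ?case by (simp; blast)
qed simp

lemma cc_order:
  assumes "distinct (xs @ b # ys)"
    and "a \<in> set xs"
    and "a \<in> cluster_centres c \<alpha> C {} (xs @ b # ys)"
    and "b \<in> cluster_centres c \<alpha> C {} (xs @ b # ys)"
  shows "c a b > 2 * \<alpha> * C b"
proof -
  define S0 where "S0 = cluster_centres c \<alpha> C {} xs"
  define S1 where "S1 = (if \<exists>l\<in>S0. c l b \<le> 2 * \<alpha> * C b then S0 else insert b S0)"
  have R: "cluster_centres c \<alpha> C {} (xs @ b # ys) = cluster_centres c \<alpha> C S1 ys"
    by (simp add: cc_append S0_def S1_def)
  have S0sub: "S0 \<subseteq> set xs" using cc_sub[of c \<alpha> C "{}" xs] S0_def by auto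
  have "b \<in> S1 \<union> set ys" using assms(4) R cc_sub[of c \<alpha> C S1 ys] by auto
  hence "b \<in> S1" using assms(1) by auto
  moreover have "b \<notin> S0" using S0sub assms(1) by auto
  ultimately have nc: "\<not> (\<exists>l\<in>S0. c l b \<le> 2 * \<alpha> * C b)" unfolding S1_def by (auto split: if_splits)
  have "S1 \<subseteq> S0 \<union> {b}" unfolding S1_def by auto
  hence "a \<in> S0 \<union> {b} \<union> set ys" using assms(3) R cc_sub[of c \<alpha> C S1 ys] by auto
  hence "a \<in> S0" using assms(1,2) by auto
  with nc show ?thesis by force
qed

lemma mem_mid: "b \<in> set (xs @ a # ys) \<Longrightarrow> b \<notin> set xs \<Longrightarrow> a \<noteq> b \<Longrightarrow> b \<in> set ys" by auto

lemma before_or_after: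
  assumes "a \<in> set ord" "b \<in> set ord" "a \<noteq> b"
  shows "(\<exists>xs ys. ord = xs @ b # ys \<and> a \<in> set xs) \<or> (\<exists>xs ys. ord = xs @ a # ys \<and> b \<in> set xs)"
proof -
  obtain xs ys where o: "ord = xs @ a # ys" using split_list[OF assms(1)] by blast
  show ?thesis
  proof (cases "b \<in> set xs")
    case True
    have "\<exists>xs ys. ord = xs @ a # ys \<and> b \<in> set xs" using o True by blast
    then show ?thesis by (rule disjI2)
  next
    case False
    have "b \<in> set (xs @ a # ys)" using assms(2) o by simp
    then have "b \<in> set ys" using mem_mid False assms(3) by metis
    then obtain us vs where "ys = us @ b # vs" using split_list by metis
    then have o2: "ord = (xs @ a # us) @ b # vs" using o by simp
    have "a \<in> set (xs @ a # us)" by simp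
    with o2 have "\<exists>xs ys. ord = xs @ b # ys \<and> a \<in> set xs" by blast
    then show ?thesis by (rule disjI1)
  qed
qed

theorem lemma1:
  fixes N :: "'a set" and d :: "'a \<Rightarrow> real" and M :: real and k :: nat
    and c :: "'a \<Rightarrow> 'a \<Rightarrow> real" and \<alpha> :: real
    and x :: "'a \<Rightarrow> 'a \<Rightarrow> real" and y :: "'a \<Rightarrow> real"
    and ord :: "'a list" and assign :: "'a \<Rightarrow> 'a"
  assumes "finite N" and "M > 0" and "\<forall>j\<in>N. d j \<ge> 0" and "k \<ge> 1"
    and "metric_costs N c"
    and "\<alpha> \<ge> 4"
    and "lp_optimal N d M k c x y"
    and "distinct ord" and "set ord = N" and "sorted (map (Cval N c x) ord)"
    and "\<forall>j\<in>N. assign j \<in> cluster_centres c \<alpha> (Cval N c x) {} ord \<and>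
           (\<forall>l\<in>cluster_centres c \<alpha> (Cval N c x) {} ord. c l j \<ge> c (assign j) j)"
  shows "\<forall>l\<in>cluster_centres c \<alpha> (Cval N c x) {} ord.
           (\<Sum>j\<in>{j\<in>N. assign j = l}. y j) \<ge> (\<alpha> - 1) / \<alpha>"
proof
  define C where "C = Cval N c x"
  define R where "R = cluster_centres c \<alpha> C {} ord"
  fix l assume lR0: "l \<in> cluster_centres c \<alpha> (Cval N c x) {} ord"
  hence lR: "l \<in> R" unfolding R_def C_def .
  have RN: "R \<subseteq> N" using cc_sub[of c \<alpha> C "{}" ord] assms(9) R_def by auto
  have lN: "l \<in> N" using lR RN by auto
  have feas: "lp_feasible N d M k x y" using assms(7) lp_optimal_def by blast
  have xsum: "(\<Sum>i\<in>N. x i l) = 1" using feas lN unfolding lp_feasible_def by blast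
  have xnn: "\<And>i. i \<in> N \<Longrightarrow> 0 \<le> x i l \<and> x i l \<le> y i" using feas lN unfolding lp_feasible_def by blast
  have ynn: "\<And>i. i \<in> N \<Longrightarrow> 0 \<le> y i" using feas unfolding lp_feasible_def by blast
  have cnn: "\<And>i j. i \<in> N \<Longrightarrow> j \<in> N \<Longrightarrow> 0 \<le> c i j" using assms(5) unfolding metric_costs_def by blast
  have csym: "\<And>i j. i \<in> N \<Longrightarrow> j \<in> N \<Longrightarrow> c i j = c j i" using assms(5) unfolding metric_costs_def by blast
  have ctri: "\<And>i j m. i \<in> N \<Longrightarrow> j \<in> N \<Longrightarrow> m \<in> N \<Longrightarrow> c i m \<le> c i j + c j m"
    using assms(5) unfolding metric_costs_def by blast
  have apos: "\<alpha> > 0" using assms(6) by simp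
  define Cl where "Cl = C l"
  have Cl_def2: "Cl = (\<Sum>i\<in>N. c i l * x i l)" unfolding Cl_def C_def Cval_def by simp
  have Clnn: "Cl \<ge> 0" unfolding Cl_def2 using cnn xnn lN by (intro sum_nonneg) auto
  define B where "B = {i\<in>N. c i l \<le> \<alpha> * Cl}"
  have sortC: "\<And>xs b ys a. ord = xs @ b # ys \<Longrightarrow> a \<in> set xs \<Longrightarrow> C a \<le> C b"
    using assms(10) unfolding C_def by (auto simp: sorted_append)
  have sep: "\<And>a b xs ys. ord = xs @ b # ys \<Longrightarrow> a \<in> set xs \<Longrightarrow> a \<in> R \<Longrightarrow> b \<in> R \<Longrightarrow> c a b > 2 * \<alpha> * C b"
    using cc_order assms(8) unfolding R_def by metis
  have B_sub: "B \<subseteq> {j\<in>N. assign j = l}"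
  proof
    fix i assume iB: "i \<in> B"
    hence iN: "i \<in> N" and cil: "c i l \<le> \<alpha> * Cl" unfolding B_def by auto
    define l' where "l' = assign i"
    have l'R: "l' \<in> R" and le: "c l' i \<le> c l i"
      using assms(11) iN lR unfolding l'_def R_def C_def by auto
    have l'N: "l' \<in> N" using l'R RN by auto
    have "l' = l"
    proof (rule ccontr)
      assume ne: "l' \<noteq> l"
      have "c l l' \<le> c l i + c i l'" using ctri lN iN l'N by blast
      also have "\<dots> \<le> 2 * \<alpha> * Cl" using le cil csym lN iN l'N by fastforce
      finally have d1: "c l l' \<le> 2 * \<alpha> * Cl" .
      have d2: "c l' l \<le> 2 * \<alpha> * Cl" using d1 csym lN l'N by simp
      have "l \<in> set ord" "l' \<in> set ord" using lN l'N assms(9) by auto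
      from before_or_after[OF this ne[symmetric]] show False
      proof
        assume "\<exists>xs ys. ord = xs @ l' # ys \<and> l \<in> set xs"
        then obtain xs ys where o: "ord = xs @ l' # ys" "l \<in> set xs" by blast
        have "C l \<le> C l'" using sortC[OF o] .
        moreover have "c l l' > 2 * \<alpha> * C l'" using sep[OF o lR l'R] .
        ultimately show False using d1 apos unfolding Cl_def
          by (smt (verit) mult_left_mono)
      next
        assume "\<exists>xs ys. ord = xs @ l # ys \<and> l' \<in> set xs"
        then obtain xs ys where o: "ord = xs @ l # ys" "l' \<in> set xs" by blast
        have "c l' l > 2 * \<alpha> * C l" using sep[OF o l'R lR] .
        then show False using d2 unfolding Cl_def by simp
      qed
    qed
    then show "i \<in> {j\<in>N. assign j = l}" using iN l'_def by simp
  qed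
  have fin: "finite B" "finite (N - B)" using assms(1) unfolding B_def by auto
  have split: "(\<Sum>i\<in>N. x i l) = (\<Sum>i\<in>B. x i l) + (\<Sum>i\<in>N - B. x i l)"
    using assms(1) B_def by (metis (no_types, lifting) mem_Collect_eq subsetI sum.subset_diff add.commute)
  have outer: "(\<Sum>i\<in>N - B. x i l) \<le> 1 / \<alpha>"
  proof -
    have "(\<Sum>i\<in>N - B. c i l * x i l) \<le> (\<Sum>i\<in>N. c i l * x i l)"
      using assms(1) cnn xnn lN by (intro sum_mono2) (auto intro: mult_nonneg_nonneg)
    hence A: "(\<Sum>i\<in>N - B. c i l * x i l) \<le> Cl" using Cl_def2 by simp
    show ?thesis
    proof (cases "Cl = 0")
      case True
      have nn: "\<forall>i\<in>N - B. 0 \<le> c i l * x i l" using cnn xnn lN by auto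
      have "(\<Sum>i\<in>N - B. c i l * x i l) = 0"
      proof -
        have "0 \<le> (\<Sum>i\<in>N - B. c i l * x i l)" proof (rule sum_nonneg)
          fix i assume "i \<in> N - B" then show "0 \<le> c i l * x i l" using nn by blast
        qed
        then show ?thesis using A True by (simp only: order_antisym)
      qed
      hence "\<forall>i\<in>N - B. c i l * x i l = 0" using sum_nonneg_eq_0_iff[OF fin(2), of "\<lambda>i. c i l * x i l"] nn by simp
      moreover have "\<forall>i\<in>N - B. c i l > 0" using True unfolding B_def by auto
      ultimately have "\<forall>i\<in>N - B. x i l = 0" by (metis mult_eq_0_iff order_less_irrefl)
      hence "(\<Sum>i\<in>N - B. x i l) = 0" by simp
      then show ?thesis using apos by simp
    next
      case False
      hence Cp: "Cl > 0" using Clnn by simp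
      have pt: "\<alpha> * Cl * x i l \<le> c i l * x i l" if iN: "i \<in> N - B" for i
      proof -
        have "i \<notin> B" "i \<in> N" using iN by blast+
        hence "\<not> c i l \<le> \<alpha> * Cl" unfolding B_def by simp
        hence "\<alpha> * Cl \<le> c i l" by linarith
        moreover have "0 \<le> x i l" using xnn iN by blast
        ultimately show ?thesis by (rule mult_right_mono)
      qed
      have "(\<Sum>i\<in>N - B. \<alpha> * Cl * x i l) \<le> (\<Sum>i\<in>N - B. c i l * x i l)"
        by (rule sum_mono) (rule pt)
      moreover have "(\<Sum>i\<in>N - B. \<alpha> * Cl * x i l) = \<alpha> * Cl * (\<Sum>i\<in>N - B. x i l)"
        by (simp add: sum_distrib_left)
      ultimately have "\<alpha> * Cl * (\<Sum>i\<in>N - B. x i l) \<le> Cl" using A by linarith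
      hence "Cl * (\<alpha> * (\<Sum>i\<in>N - B. x i l)) \<le> Cl * 1" by (simp add: mult_ac)
      hence "\<alpha> * (\<Sum>i\<in>N - B. x i l) \<le> 1" using Cp by (rule mult_left_le_imp_le)
      then show ?thesis using apos by (simp add: pos_le_divide_eq mult.commute)
    qed
  qed
  have "(\<alpha> - 1) / \<alpha> = 1 - 1/\<alpha>" using apos by (simp add: field_simps)
  also have "\<dots> \<le> (\<Sum>i\<in>B. x i l)" using split xsum outer by linarith
  also have "\<dots> \<le> (\<Sum>i\<in>B. y i)" using xnn unfolding B_def by (intro sum_mono) auto
  also have "\<dots> \<le> (\<Sum>j\<in>{j\<in>N. assign j = l}. y j)"
    using B_sub assms(1) ynn by (intro sum_mono2) auto
  finally show "(\<Sum>j\<in>{j\<in>N. assign j = l}. y j) \<ge> (\<alpha> - 1) / \<alpha>" .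
qed

end
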